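(* Let $g\in C^{\omega}(\mathbb{R})$ satisfy: $g(v)>0$, $g'(v)\ge0$ and $\frac{d^2}{dv^2}(v^2g(v^2))>0$ for all $v>0$, and $\lim_{v\to\infty}v\,g(v^2)=\infty$. Then the set of all $\beta>0$ for which the toy model has a toy steady tip growth solution is a closed subset of $\mathbb{R}_{>0}$ with empty interior.
   Context: Toy model: for a real-analytic $g:\mathbb{R}\to\mathbb{R}$ with $g(v)>0$ for $v>0$ and a parameter $\beta$, the toy model is the planar ODE (prime denotes $d/ds$) $$\rho'=\frac32\,\frac{1-\rho^2}{r}\left(-1+\frac{\sqrt{1-\rho^2}\,\big(\beta r^2 g(r^2)+\rho\big)}{r}\right),\qquad r'=\rho,$$ on $M_0=(-1,1)\times\mathbb{R}_{>0}$. For a solution $(\rho,r)$ defined on an interval $(0,s_{\max})$: (S1) $\lim_{s\to0^+}\rho=1$, $\lim_{s\to0^+}r=0$, $\lim_{s\to0^+}\sqrt{1-\rho^2}/r=\eta_0>0$; (S2) there exist $s_0>0$ and real-analytic $G:(-a,a)\to\mathbb{R}_{>0}$, $a=r(s_0)^2$, with $\rho(s)=G(r(s)^2)$ for $s\in(0,s_0)$; (S3) the solution is defined on $(0,\infty)$ with $\rho'(s)<0$, $\rho(s)>0$ for all $s>0$; (S4) $\lim_{s\to\infty}\rho=0$, $\lim_{s\to\infty}r=r_\infty>0$. A toy steady tip growth solution is a solution satisfying (S1)–(S4). *)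

theory Defs
  imports "HOL-Analysis.Analysis"
begin

definition real_analytic_on :: "(real \<Rightarrow> real) \<Rightarrow> real set \<Rightarrow> bool" where
  "real_analytic_on f S \<longleftrightarrow>
     (\<forall>x\<in>S. \<exists>\<delta>>0. \<exists>c::nat \<Rightarrow> real. ball x \<delta> \<subseteq> S \<and>
        (\<forall>y\<in>ball x \<delta>. (\<lambda>n. c n * (y - x) ^ n) sums f y))"

definition toy_rhs :: "(real \<Rightarrow> real) \<Rightarrow> real \<Rightarrow> real \<Rightarrow> real \<Rightarrow> real" where
  "toy_rhs g \<beta> \<rho> r =
     3/2 * (1 - \<rho>\<^sup>2) / r * (-1 + sqrt (1 - \<rho>\<^sup>2) * (\<beta> * r\<^sup>2 * g (r\<^sup>2) + \<rho>) / r)"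

definition toy_steady_tip_growth :: "(real \<Rightarrow> real) \<Rightarrow> real \<Rightarrow> (real \<Rightarrow> real) \<Rightarrow> (real \<Rightarrow> real) \<Rightarrow> bool" where
  "toy_steady_tip_growth g \<beta> \<rho> r \<longleftrightarrow>
     (\<forall>s>0. -1 < \<rho> s \<and> \<rho> s < 1 \<and> r s > 0 \<and>
        (\<rho> has_real_derivative toy_rhs g \<beta> (\<rho> s) (r s)) (at s) \<and>
        (r has_real_derivative \<rho> s) (at s)) \<and>
     \<comment> \<open>(S1)\<close>
     (\<rho> \<longlongrightarrow> 1) (at_right 0) \<and> (r \<longlongrightarrow> 0) (at_right 0) \<and>
     (\<exists>\<eta>0>0. ((\<lambda>s. sqrt (1 - (\<rho> s)\<^sup>2) / r s) \<longlongrightarrow> \<eta>0) (at_right 0)) \<and>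
     \<comment> \<open>(S2)\<close>
     (\<exists>s0>0. \<exists>G. real_analytic_on G {-((r s0)\<^sup>2)<..<(r s0)\<^sup>2} \<and>
        (\<forall>v\<in>{-((r s0)\<^sup>2)<..<(r s0)\<^sup>2}. G v > 0) \<and>
        (\<forall>s\<in>{0<..<s0}. \<rho> s = G ((r s)\<^sup>2))) \<and>
     \<comment> \<open>(S3)\<close>
     (\<forall>s>0. deriv \<rho> s < 0 \<and> \<rho> s > 0) \<and>
     \<comment> \<open>(S4)\<close>
     (\<rho> \<longlongrightarrow> 0) at_top \<and> (\<exists>r_inf>0. (r \<longlongrightarrow> r_inf) at_top)"

end

theory Submission
  imports Defs
begin


lemma analytic_has_deriv:
  assumes "real_analytic_on f S" "x \<in> S"
  shows "\<exists>D. (f has_real_derivative D) (at x)"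
proof -
  obtain \<delta> c where d: "\<delta> > 0" "ball x \<delta> \<subseteq> S"
    and s: "\<And>y. y \<in> ball x \<delta> \<Longrightarrow> (\<lambda>n. c n * (y - x) ^ n) sums f y"
    using assms unfolding real_analytic_on_def by blast
  define h where "h z = (\<Sum>n. c n * z ^ n)" for z :: real
  have sm: "summable (\<lambda>n. c n * z ^ n)" if "norm z < \<delta>" for z
  proof -
    have "x + z \<in> ball x \<delta>" using that by (simp add: dist_norm)
    from s[OF this] show ?thesis by (simp add: sums_iff)
  qed
  have hd: "(h has_real_derivative (\<Sum>n. diffs c n * 0 ^ n)) (at 0)"
    unfolding h_def by (rule termdiffs_strong'[of \<delta>]) (use sm d in auto)
  have "((\<lambda>y. h (y - x)) has_real_derivative (\<Sum>n. diffs c n * 0 ^ n) * 1) (at x)"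
    by (rule DERIV_chain2[where f=h]) (use hd in \<open>auto intro!: derivative_eq_intros\<close>)
  moreover have "h (y - x) = f y" if "y \<in> ball x \<delta>" for y
    using s[OF that] unfolding h_def by (simp add: sums_iff)
  ultimately have "(f has_real_derivative (\<Sum>n. diffs c n * 0 ^ n) * 1) (at x)"
    using has_field_derivative_transform_within_open[where S="ball x \<delta>" and f="\<lambda>y. h (y - x)" and g=f] d(1)
    by simp
  then show ?thesis by blast
qed



lemma tip_eta:
  assumes sol: "toy_steady_tip_growth g \<beta> \<rho> r" and gc: "isCont g 0"
  shows "((\<lambda>s. sqrt (1 - (\<rho> s)\<^sup>2) / r s) \<longlongrightarrow> 1/3) (at_right 0)"
proof -
  note S = sol[unfolded toy_steady_tip_growth_def]
  have basic: "\<And>s. s > 0 \<Longrightarrow> -1 < \<rho> s \<and> \<rho> s < 1 \<and> r s > 0 \<and>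
        (\<rho> has_real_derivative toy_rhs g \<beta> (\<rho> s) (r s)) (at s) \<and>
        (r has_real_derivative \<rho> s) (at s)" using S by blast
  have pos: "\<And>s. s > 0 \<Longrightarrow> \<rho> s > 0" using S by blast
  have r0: "(r \<longlongrightarrow> 0) (at_right 0)" and rho1: "(\<rho> \<longlongrightarrow> 1) (at_right 0)" using S by blast+
  obtain \<eta> where eta: "\<eta> > 0" "((\<lambda>s. sqrt (1 - (\<rho> s)\<^sup>2) / r s) \<longlongrightarrow> \<eta>) (at_right 0)"
    using S by blast
  define q where "q s = sqrt (1 - (\<rho> s)\<^sup>2) / r s" for s
  have q: "(q \<longlongrightarrow> \<eta>) (at_right 0)" using eta(2) unfolding q_def .
  have evpos: "eventually (\<lambda>s. s > 0) (at_right (0::real))"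
    by (simp add: eventually_at_right_less)
  have g2: "((\<lambda>s. g ((r s)\<^sup>2)) \<longlongrightarrow> g 0) (at_right 0)"
  proof -
    have "((\<lambda>s. (r s)\<^sup>2) \<longlongrightarrow> 0) (at_right 0)" using tendsto_power[OF r0, of 2] by simp
    then show ?thesis using isCont_tendsto_compose[OF gc] by blast
  qed
  define L where "L = 3/4 * \<eta>\<^sup>2 * (1 - \<eta>)"
  have lim1: "((\<lambda>s. - toy_rhs g \<beta> (\<rho> s) (r s) / (2 * r s * \<rho> s)) \<longlongrightarrow> L) (at_right 0)"
  proof -
    have A: "((\<lambda>s. 3/4 * (q s)\<^sup>2 / \<rho> s * (1 - q s * (\<beta> * (r s)\<^sup>2 * g ((r s)\<^sup>2) + \<rho> s))) \<longlongrightarrow>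
              3/4 * \<eta>\<^sup>2 / 1 * (1 - \<eta> * (\<beta> * 0\<^sup>2 * g 0 + 1))) (at_right 0)"
      by (intro tendsto_intros q rho1 r0 g2) simp
    have B: "eventually (\<lambda>s. 3/4 * (q s)\<^sup>2 / \<rho> s * (1 - q s * (\<beta> * (r s)\<^sup>2 * g ((r s)\<^sup>2) + \<rho> s))
           = - toy_rhs g \<beta> (\<rho> s) (r s) / (2 * r s * \<rho> s)) (at_right 0)"
      using evpos
    proof eventually_elim
      case (elim s)
      have b: "-1 < \<rho> s" "\<rho> s < 1" "r s > 0" using basic[OF elim] by auto
      have p: "\<rho> s > 0" using pos[OF elim] .
      have sq: "(sqrt (1 - (\<rho> s)\<^sup>2))\<^sup>2 = 1 - (\<rho> s)\<^sup>2"
        using b by (intro real_sqrt_pow2) (simp add: abs_square_less_1 less_imp_le)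
      show ?case unfolding toy_rhs_def q_def using b p sq
        by (simp add: field_simps power2_eq_square)
    qed
    show ?thesis using Lim_transform_eventually[OF A B] unfolding L_def by simp
  qed
  have lim2: "((\<lambda>s. (1 - \<rho> s) / (r s)\<^sup>2) \<longlongrightarrow> L) (at_right 0)"
  proof (rule lhopital_right_0[where f'="\<lambda>s. - toy_rhs g \<beta> (\<rho> s) (r s)" and g'="\<lambda>s. 2 * r s * \<rho> s"])
    show "((\<lambda>s. 1 - \<rho> s) \<longlongrightarrow> 0) (at_right 0)" using tendsto_diff[OF tendsto_const rho1, of 1] by simp
    show "((\<lambda>s. (r s)\<^sup>2) \<longlongrightarrow> 0) (at_right 0)" using tendsto_power[OF r0, of 2] by simp
    show "eventually (\<lambda>s. (r s)\<^sup>2 \<noteq> 0) (at_right 0)" using evpos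
      by eventually_elim (use basic in \<open>metis less_irrefl power_not_zero\<close>)
    show "eventually (\<lambda>s. 2 * r s * \<rho> s \<noteq> 0) (at_right 0)" using evpos
      by eventually_elim (use basic pos in force)
    show "eventually (\<lambda>s. ((\<lambda>s. 1 - \<rho> s) has_real_derivative - toy_rhs g \<beta> (\<rho> s) (r s)) (at s)) (at_right 0)"
      using evpos by eventually_elim (use basic in \<open>auto intro!: derivative_eq_intros\<close>)
    show "eventually (\<lambda>s. ((\<lambda>s. (r s)\<^sup>2) has_real_derivative 2 * r s * \<rho> s) (at s)) (at_right 0)"
      using evpos by eventually_elim (use basic in \<open>auto intro!: derivative_eq_intros\<close>)
    show "((\<lambda>s. - toy_rhs g \<beta> (\<rho> s) (r s) / (2 * r s * \<rho> s)) \<longlongrightarrow> L) (at_right 0)" by (rule lim1)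
  qed
  have lim3: "((\<lambda>s. (1 - \<rho> s) / (r s)\<^sup>2) \<longlongrightarrow> \<eta>\<^sup>2 / 2) (at_right 0)"
  proof -
    have A: "((\<lambda>s. (q s)\<^sup>2 / (1 + \<rho> s)) \<longlongrightarrow> \<eta>\<^sup>2 / (1 + 1)) (at_right 0)"
      by (intro tendsto_intros q rho1) simp
    have B: "eventually (\<lambda>s. (q s)\<^sup>2 / (1 + \<rho> s) = (1 - \<rho> s) / (r s)\<^sup>2) (at_right 0)"
      using evpos
    proof eventually_elim
      case (elim s)
      have b: "-1 < \<rho> s" "\<rho> s < 1" "r s > 0" using basic[OF elim] by auto
      have sq: "(sqrt (1 - (\<rho> s)\<^sup>2))\<^sup>2 = 1 - (\<rho> s)\<^sup>2"
        using b by (intro real_sqrt_pow2) (simp add: abs_square_less_1 less_imp_le)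
      have "(q s)\<^sup>2 = (1 - (\<rho> s)\<^sup>2) / (r s)\<^sup>2" unfolding q_def by (simp add: power_divide sq)
      then show ?case using b by (simp add: field_simps power2_eq_square)
    qed
    show ?thesis using Lim_transform_eventually[OF A B] by simp
  qed
  have "L = \<eta>\<^sup>2 / 2" using tendsto_unique[OF _ lim2 lim3] by simp
  then have e: "\<eta> = 1/3" using eta(1) unfolding L_def by (simp add: field_simps power2_eq_square)
  show ?thesis using eta(2) unfolding e .
qed



lemma deriv_limit_zero:
  fixes f f' :: "real \<Rightarrow> real"
  assumes der: "\<And>s. s > 0 \<Longrightarrow> (f has_real_derivative f' s) (at s)"
    and fl: "(f \<longlongrightarrow> a) at_top" and dl: "(f' \<longlongrightarrow> L) at_top"
  shows "L = 0"
proof (rule ccontr)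
  assume L: "L \<noteq> 0"
  then have e: "\<bar>L\<bar>/2 > 0" by simp
  have ev1: "eventually (\<lambda>s. \<bar>f' s - L\<bar> < \<bar>L\<bar>/2) at_top"
    using tendstoD[OF dl e] by (simp add: dist_real_def)
  have sh: "filterlim (\<lambda>s::real. 1 + s) at_top at_top"
    by (rule filterlim_tendsto_add_at_top[OF tendsto_const filterlim_ident])
  have "((\<lambda>s. f (1 + s) - f s) \<longlongrightarrow> a - a) at_top"
    by (intro tendsto_intros fl filterlim_compose[OF fl sh])
  then have ev2: "eventually (\<lambda>s. \<bar>f (1 + s) - f s\<bar> < \<bar>L\<bar>/2) at_top"
    using tendstoD[OF _ e] by (force simp add: dist_real_def)
  obtain T where T: "\<And>s. s \<ge> T \<Longrightarrow> \<bar>f' s - L\<bar> < \<bar>L\<bar>/2" using ev1 by (auto simp: eventually_at_top_linorder)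
  obtain T2 where T2: "\<And>s. s \<ge> T2 \<Longrightarrow> \<bar>f (1 + s) - f s\<bar> < \<bar>L\<bar>/2" using ev2 by (auto simp: eventually_at_top_linorder)
  define s where "s = max (max T T2) 1"
  have "s < 1 + s" by simp
  from MVT2[OF this, of f f'] obtain z where z: "s < z" "z < 1 + s" "f (1 + s) - f s = (1 + s - s) * f' z"
    using der s_def by fastforce
  have "\<bar>f' z - L\<bar> < \<bar>L\<bar>/2" using T z(1) s_def by auto
  moreover have "\<bar>f (1 + s) - f s\<bar> < \<bar>L\<bar>/2" using T2 s_def by auto
  moreover have "f (1 + s) - f s = f' z" using z(3) by simp
  ultimately show False by arith
qed

lemma tail_balance:
  assumes sol: "toy_steady_tip_growth g \<beta> \<rho> r" and gc: "\<And>x. isCont g x"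
    and R: "(r \<longlongrightarrow> R) at_top" "R > 0"
  shows "\<beta> * R * g (R\<^sup>2) = 1"
proof -
  note S = sol[unfolded toy_steady_tip_growth_def]
  have der: "\<And>s. s > 0 \<Longrightarrow> (\<rho> has_real_derivative toy_rhs g \<beta> (\<rho> s) (r s)) (at s)" using S by blast
  have rho0: "(\<rho> \<longlongrightarrow> 0) at_top" using S by blast
  have g2: "((\<lambda>s. g ((r s)\<^sup>2)) \<longlongrightarrow> g (R\<^sup>2)) at_top"
    using isCont_tendsto_compose[OF gc tendsto_power[OF R(1), of 2]] .
  have "((\<lambda>s. toy_rhs g \<beta> (\<rho> s) (r s)) \<longlongrightarrow>
     3/2 * (1 - 0\<^sup>2) / R * (-1 + sqrt (1 - 0\<^sup>2) * (\<beta> * R\<^sup>2 * g (R\<^sup>2) + 0) / R)) at_top"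
    unfolding toy_rhs_def using R(2) by (intro tendsto_intros rho0 R(1) g2) auto
  from deriv_limit_zero[OF der rho0 this] have
    "3/2 * (1 - 0\<^sup>2) / R * (-1 + sqrt (1 - 0\<^sup>2) * (\<beta> * R\<^sup>2 * g (R\<^sup>2) + 0) / R) = 0" .
  then show ?thesis using R(2) by (simp add: field_simps power2_eq_square)
qed



lemma reparam:
  fixes \<rho> r :: "real \<Rightarrow> real"
  assumes der: "\<And>s. s > 0 \<Longrightarrow> (r has_real_derivative \<rho> s) (at s)"
    and pos: "\<And>s. s > 0 \<Longrightarrow> \<rho> s > 0"
    and r0: "(r \<longlongrightarrow> 0) (at_right 0)" and rR: "(r \<longlongrightarrow> R) at_top"
  shows "\<exists>\<phi>. (\<forall>x\<in>{0<..<R}. \<phi> x > 0 \<and> r (\<phi> x) = x \<and> isCont \<phi> x) \<and>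
              filterlim \<phi> (at_right 0) (at_right 0) \<and> filterlim \<phi> at_top (at_left R)"
proof -
  have mono: "r s < r t" if "0 < s" "s < t" for s t
  proof -
    have d: "\<And>x. s \<le> x \<Longrightarrow> x \<le> t \<Longrightarrow> (r has_real_derivative \<rho> x) (at x)"
      using der that by simp
    from MVT2[OF that(2) d] obtain z where "s < z" "z < t" "r t - r s = (t - s) * \<rho> z"
      by blast
    moreover have "\<rho> z > 0" using pos \<open>s < z\<close> that by auto
    moreover have "(t - s) * \<rho> z > 0" using \<open>\<rho> z > 0\<close> that by simp
    ultimately show ?thesis by linarith
  qed
  have cont: "isCont r s" if "s > 0" for s using der[OF that] by (rule DERIV_isCont)
  have rpos: "r s > 0" if "s > 0" for s
  proof -
    have "eventually (\<lambda>t. r t \<le> r (s/2)) (at_right 0)"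
      unfolding eventually_at_right[OF \<open>s>0\<close>]
      by (rule exI[of _ "s/2"]) (use that mono in \<open>force intro: less_imp_le\<close>)
    then have "0 \<le> r (s/2)" using tendsto_upperbound[OF r0] by simp
    also have "r (s/2) < r s" using mono that by simp
    finally show ?thesis .
  qed
  have rlt: "r s < R" if "s > 0" for s
  proof -
    have "r s < r (s + 1)" using mono that by simp
    also have "r (s + 1) \<le> R"
    proof (rule tendsto_lowerbound[OF rR])
      show "eventually (\<lambda>t. r (s + 1) \<le> r t) at_top"
        unfolding eventually_at_top_linorder
        by (rule exI[of _ "s+1"]) (use that mono in \<open>force simp: le_less\<close>)
    qed simp
    finally show ?thesis .
  qed
  have ex: "\<exists>s>0. r s = x" if "0 < x" "x < R" for x
  proof -
    have "eventually (\<lambda>t. r t < x) (at_right 0)" using order_tendstoD(2)[OF r0 that(1)] .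
    then obtain b where b: "b > 0" "\<And>t. t > 0 \<Longrightarrow> t < b \<Longrightarrow> r t < x"
      unfolding eventually_at_right[OF zero_less_one] by auto
    define t0 where "t0 = b/2"
    have t0: "t0 > 0" "r t0 < x" using b unfolding t0_def by auto
    have "eventually (\<lambda>t. x < r t) at_top" using order_tendstoD(1)[OF rR that(2)] .
    then obtain T where T: "\<And>t. t \<ge> T \<Longrightarrow> x < r t" by (auto simp: eventually_at_top_linorder)
    define t1 where "t1 = max T (t0 + 1)"
    have t1: "t0 \<le> t1" "x < r t1" using T unfolding t1_def by auto
    from IVT[of r t0 x t1] t1 t0 cont obtain s where "t0 \<le> s" "s \<le> t1" "r s = x" by force
    then show ?thesis using t0 by (intro exI[of _ s]) auto
  qed
  define \<phi> where "\<phi> x = (THE s. s > 0 \<and> r s = x)" for x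
  have inj: "s = t" if "s > 0" "t > 0" "r s = r t" for s t
    using mono[of s t] mono[of t s] that by (cases s t rule: linorder_cases) auto
  have phi: "\<phi> x > 0 \<and> r (\<phi> x) = x" if x: "0 < x" "x < R" for x
  proof -
    obtain s where s: "s > 0" "r s = x" using ex[OF x] by blast
    have "\<phi> x = s" unfolding \<phi>_def by (rule the_equality) (use s inj in blast)+
    then show ?thesis using s by simp
  qed
  have phir: "\<phi> (r s) = s" if "s > 0" for s
  proof -
    have "r s > 0" "r s < R" using rpos rlt that by auto
    from phi[OF this] have "\<phi> (r s) > 0" "r (\<phi> (r s)) = r s" by auto
    then show ?thesis using inj that by blast
  qed
  have phic: "isCont \<phi> x" if "0 < x" "x < R" for x
  proof -
    define s where "s = \<phi> x"
    have s: "s > 0" "r s = x" using phi[OF that] s_def by auto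
    have "isCont \<phi> (r s)"
    proof (rule isCont_inverse_function[where d="s/2" and x=s and f=r and g=\<phi>])
      fix z assume "\<bar>z - s\<bar> \<le> s/2"
      then have z: "z > 0" using s(1) by arith
      show "\<phi> (r z) = z" by (rule phir[OF z])
      show "isCont r z" by (rule cont[OF z])
    qed (use s in simp)
    then show ?thesis using s by simp
  qed
  have phimono: "\<phi> x < a" if "0 < x" "x < R" "a > 0" "x < r a" for x a
  proof (rule ccontr)
    assume "\<not> \<phi> x < a"
    then have "a \<le> \<phi> x" by simp
    then have "r a \<le> r (\<phi> x)" using mono[of a "\<phi> x"] that by (cases "a = \<phi> x") auto
    then show False using phi[OF that(1,2)] that by simp
  qed
  have R0: "R > 0" using rlt[of 1] rpos[of 1] by simp
  have l1: "filterlim \<phi> (at_right 0) (at_right 0)"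
    unfolding filterlim_at
  proof
    show "eventually (\<lambda>x. \<phi> x \<in> {0<..} \<and> \<phi> x \<noteq> 0) (at_right 0)"
      unfolding eventually_at_right[OF R0] by (rule exI[of _ R]) (use R0 phi in fastforce)
    show "(\<phi> \<longlongrightarrow> 0) (at_right 0)"
    proof (rule order_tendstoI)
      fix a :: real assume "a < 0"
      show "eventually (\<lambda>x. a < \<phi> x) (at_right 0)"
        unfolding eventually_at_right[OF R0] by (rule exI[of _ R]) (use R0 phi \<open>a<0\<close> in force)
    next
      fix a :: real assume a: "0 < a"
      have "r a > 0" using rpos a by simp
      show "eventually (\<lambda>x. \<phi> x < a) (at_right 0)"
        unfolding eventually_at_right[OF \<open>r a > 0\<close>]
        by (rule exI[of _ "min R (r a)"]) (use R0 \<open>r a > 0\<close> phimono a in auto)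
    qed
  qed
  have l2: "filterlim \<phi> at_top (at_left R)"
    unfolding filterlim_at_top
  proof
    fix Z :: real
    define s where "s = max Z 1"
    have s: "s > 0" "Z \<le> s" unfolding s_def by auto
    have "r s < R" "r s > 0" using rlt rpos s by auto
    show "eventually (\<lambda>x. Z \<le> \<phi> x) (at_left R)"
      unfolding eventually_at_left[OF \<open>r s < R\<close>]
    proof (intro exI[of _ "r s"] conjI allI impI)
      fix y assume y: "r s < y" "y < R"
      then have "0 < y" using \<open>r s > 0\<close> by simp
      have "s < \<phi> y"
      proof (rule ccontr)
        assume "\<not> s < \<phi> y"
        then have "r (\<phi> y) \<le> r s" using mono[of "\<phi> y" s] phi[OF \<open>0<y\<close> y(2)] by (cases "\<phi> y = s") auto
        then show False using phi[OF \<open>0<y\<close> y(2)] y by simp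
      qed
      then show "Z \<le> \<phi> y" using s by simp
    qed (rule \<open>r s < R\<close>)
  qed
  show ?thesis by (rule exI[of _ \<phi>]) (use phi phic l1 l2 in auto)
qed



lemma neg_everywhere:
  fixes f f' :: "real \<Rightarrow> real"
  assumes der: "\<And>x. 0 < x \<Longrightarrow> x < b \<Longrightarrow> (f has_real_derivative f' x) (at x)"
    and zero: "\<And>x. 0 < x \<Longrightarrow> x < b \<Longrightarrow> f x = 0 \<Longrightarrow> f' x > 0"
    and c: "0 < c" "c < b" "\<And>x. c < x \<Longrightarrow> x < b \<Longrightarrow> f x < 0"
    and x0: "0 < x0" "x0 < b"
  shows "f x0 < 0"
proof (rule ccontr)
  assume "\<not> f x0 < 0"
  then have fx0: "f x0 \<ge> 0" by simp
  define c' where "c' = (max c x0 + b) / 2"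
  have c': "c < c'" "x0 < c'" "c' < b" using c x0 unfolding c'_def by auto
  have fc': "f c' < 0" using c(3) c' by simp
  have cont: "isCont f x" if "0 < x" "x < b" for x using der[OF that] by (rule DERIV_isCont)
  define T where "T = {x. x0 \<le> x \<and> x \<le> c' \<and> f x \<ge> 0}"
  have x0T: "x0 \<in> T" using fx0 c' unfolding T_def by simp
  have bdd: "bdd_above T" unfolding T_def by (rule bdd_aboveI[of _ c']) auto
  define z where "z = Sup T"
  have zge: "x0 \<le> z" unfolding z_def by (rule cSup_upper[OF x0T bdd])
  have zle: "z \<le> c'" unfolding z_def by (rule cSup_least) (use x0T T_def in auto)
  have upper: "y \<le> z" if "y \<in> T" for y unfolding z_def by (rule cSup_upper[OF that bdd])
  have z0: "0 < z" "z < b" using zge zle x0 c' by auto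
  consider "f z < 0" | "f z > 0" | "f z = 0" by linarith
  then show False
  proof cases
    case 1
    have "eventually (\<lambda>y. f y < 0) (at z)"
      using order_tendstoD(2)[OF cont[OF z0, unfolded isCont_def] 1] .
    then obtain d where d: "d > 0" "\<And>y. y \<noteq> z \<Longrightarrow> dist y z < d \<Longrightarrow> f y < 0"
      unfolding eventually_at by blast
    have "y \<le> z - d" if "y \<in> T" for y
    proof -
      have "y \<le> z" using upper[OF that] .
      moreover have "f y \<ge> 0" using that unfolding T_def by simp
      then have "y \<noteq> z" using 1 by auto
      moreover have "\<not> dist y z < d" using d(2)[of y] \<open>f y \<ge> 0\<close> \<open>y \<noteq> z\<close> by force
      ultimately show ?thesis by (simp add: dist_real_def)
    qed
    then have "z \<le> z - d" unfolding z_def[symmetric, THEN sym] using x0T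
      by (metis cSup_least empty_iff z_def)
    then show False using d by simp
  next
    case 2
    have "\<exists>y. z \<le> y \<and> y \<le> c' \<and> f y = 0"
      by (rule IVT2) (use fc' 2 zle z0 c' cont in auto)
    then obtain y where y: "z \<le> y" "y \<le> c'" "f y = 0" by blast
    then have "y \<in> T" using zge unfolding T_def by simp
    then have "y = z" using upper y by force
    then show False using 2 y by simp
  next
    case 3
    have "f' z > 0" using zero[OF z0 3] .
    from DERIV_pos_inc_right[OF der[OF z0] this] obtain d where
      d: "d > 0" "\<And>h. h > 0 \<Longrightarrow> h < d \<Longrightarrow> f z < f (z + h)" by blast
    have "z \<noteq> c'" using 3 fc' by auto
    then have zc: "z < c'" using zle by simp
    define h where "h = min (d/2) (c' - z)"
    have h: "h > 0" "h < d" "z + h \<le> c'" using d zc unfolding h_def by auto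
    have "f (z + h) > 0" using d(2)[OF h(1,2)] 3 by simp
    then have "z + h \<in> T" using zge h unfolding T_def by simp
    then show False using upper h by force
  qed
qed

lemma cube_ineq:
  fixes a b :: real
  assumes "0 \<le> b" "b \<le> a"
  shows "a^3 - b^3 \<ge> 3/2 * b * (a^2 - b^2)"
proof -
  have "a^3 - b^3 - 3/2 * b * (a^2 - b^2) = (a - b) * (a - b) * (a + b/2)"
    by (simp add: field_simps power2_eq_square power3_eq_cube)
  also have "\<dots> \<ge> 0" using assms by simp
  finally show ?thesis by simp
qed

definition Fb :: "(real \<Rightarrow> real) \<Rightarrow> real \<Rightarrow> real \<Rightarrow> real \<Rightarrow> real" where
  "Fb g \<beta> p x = toy_rhs g \<beta> p x / p"

lemma Fb_alt:
  assumes "0 < p" "p < 1" "x > 0"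
  shows "Fb g \<beta> p x = 3 / (2 * x) * (p - 1/p + (sqrt (1 - p\<^sup>2))^3 / x + \<beta> * x * g (x\<^sup>2) * (sqrt (1 - p\<^sup>2))^3 / p)"
proof -
  define a where "a = sqrt (1 - p\<^sup>2)"
  have a2: "a\<^sup>2 = 1 - p\<^sup>2" unfolding a_def using assms
    by (intro real_sqrt_pow2) (simp add: abs_square_less_1 less_imp_le)
  have "Fb g \<beta> p x = 3/2 * a\<^sup>2 / x * (-1 + a * (\<beta> * x\<^sup>2 * g (x\<^sup>2) + p) / x) / p"
    unfolding Fb_def toy_rhs_def a2 a_def[symmetric] ..
  also have "\<dots> = 3 / (2 * x) * (- a\<^sup>2/p + a^3 / x + \<beta> * x * g (x\<^sup>2) * a^3 / p)"
    using assms by (simp add: field_simps power2_eq_square power3_eq_cube)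
  also have "- a\<^sup>2/p = p - 1/p" using assms a2 by (simp add: field_simps power2_eq_square)
  finally show ?thesis unfolding a_def .
qed

lemma Fb_beta_mono:
  assumes "0 < p" "p < 1" "x > 0" "g (x\<^sup>2) > 0" "\<beta>1 < \<beta>2"
  shows "Fb g \<beta>1 p x < Fb g \<beta>2 p x"
proof -
  have a: "sqrt (1 - p\<^sup>2) > 0" using assms by (simp add: abs_square_less_1)
  have "\<beta>1 * x * g (x\<^sup>2) * (sqrt (1 - p\<^sup>2))^3 / p < \<beta>2 * x * g (x\<^sup>2) * (sqrt (1 - p\<^sup>2))^3 / p"
    using assms a by (intro divide_strict_right_mono mult_strict_right_mono) auto
  then show ?thesis unfolding Fb_alt[OF assms(1-3)] using assms by (simp add: field_simps)
qed

lemma Fb_slope: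
  assumes p: "99/100 \<le> p2" "p2 < p1" "p1 < 1" and x: "x > 0" and \<beta>: "\<beta> > 0" and G: "g (x\<^sup>2) \<ge> 0"
    and q: "sqrt (1 - p1\<^sup>2) \<ge> 3/10 * x"
  shows "Fb g \<beta> p1 x - Fb g \<beta> p2 x \<le> 2 / x * (p1 - p2)"
proof -
  define a1 where "a1 = sqrt (1 - p1\<^sup>2)"
  define a2 where "a2 = sqrt (1 - p2\<^sup>2)"
  have p0: "0 < p2" "0 < p1" "p2 < 1" using p by auto
  have a1sq: "a1\<^sup>2 = 1 - p1\<^sup>2" unfolding a1_def using p0 p
    by (intro real_sqrt_pow2) (auto intro!: power_le_one)
  have a2sq: "a2\<^sup>2 = 1 - p2\<^sup>2" unfolding a2_def using p0 p
    by (intro real_sqrt_pow2) (auto intro!: power_le_one)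
  have a1pos: "0 \<le> a1" unfolding a1_def using p0 p by (auto intro!: power_le_one)
  have "p2\<^sup>2 \<le> p1\<^sup>2" using p0 p by (intro power_mono) auto
  then have a12: "a1 \<le> a2" unfolding a1_def a2_def by (intro real_sqrt_le_mono) simp
  have a1x: "a1 \<ge> 3/10 * x" using q unfolding a1_def .
  define G where "G = \<beta> * x * g (x\<^sup>2)"
  have G0: "G \<ge> 0" unfolding G_def using \<beta> x G by simp
  have cube: "a1^3 \<le> a2^3" using a12 a1pos by (intro power_mono) auto
  have c1: "0 \<le> a1^3" using a1pos by simp
  have T4: "G * a1^3 / p1 - G * a2^3 / p2 \<le> 0"
  proof -
    have "a1^3 / p1 \<le> a2^3 / p1" by (rule divide_right_mono[OF cube]) (use p0 in simp)
    also have "\<dots> \<le> a2^3 / p2" using p0 p a1pos a12 by (intro divide_left_mono) auto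
    finally have "a1^3 / p1 \<le> a2^3 / p2" .
    then have "G * (a1^3 / p1) \<le> G * (a2^3 / p2)" using G0 by (rule mult_left_mono)
    then show ?thesis by simp
  qed
  have T2: "1/p2 - 1/p1 \<le> (p1 - p2) * (10000/9801)"
  proof -
    have pp: "p1 * p2 \<ge> 9801/10000" using p mult_mono[of "99/100" p1 "99/100" p2] by auto
    have "1/p2 - 1/p1 = (p1 - p2) / (p1 * p2)" using p0 by (simp add: field_simps)
    also have "\<dots> \<le> (p1 - p2) / (9801/10000)"
      using pp p by (intro divide_left_mono) auto
    finally show ?thesis by simp
  qed
  have T3: "(a1^3 - a2^3) / x \<le> - (891/1000) * (p1 - p2)"
  proof -
    have ci: "a2^3 - a1^3 \<ge> 3/2 * a1 * (a2\<^sup>2 - a1\<^sup>2)" by (rule cube_ineq[OF a1pos a12])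
    have "a2\<^sup>2 - a1\<^sup>2 = (p1 + p2) * (p1 - p2)" using a1sq a2sq by (simp add: algebra_simps power2_eq_square)
    also have "\<dots> \<ge> (198/100) * (p1 - p2)" using p by (intro mult_right_mono) auto
    finally have d2: "a2\<^sup>2 - a1\<^sup>2 \<ge> (198/100) * (p1 - p2)" .
    have "3/2 * a1 * (a2\<^sup>2 - a1\<^sup>2) \<ge> 3/2 * (3/10 * x) * ((198/100) * (p1 - p2))"
      using a1x d2 p x by (intro mult_mono) auto
    moreover have "3/2 * (3/10 * x) * ((198/100) * (p1 - p2)) = (891/1000) * x * (p1 - p2)" by simp
    ultimately have "a2^3 - a1^3 \<ge> (891/1000) * x * (p1 - p2)" using ci by linarith
    then have "(a2^3 - a1^3) / x \<ge> (891/1000) * (p1 - p2)" using x by (simp add: field_simps)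
    moreover have "(a1^3 - a2^3) / x = - ((a2^3 - a1^3) / x)" by (simp add: minus_divide_left)
    ultimately show ?thesis by linarith
  qed
  have "Fb g \<beta> p1 x - Fb g \<beta> p2 x = 3 / (2 * x) *
      ((p1 - p2) + (1/p2 - 1/p1) + (a1^3 - a2^3) / x + (G * a1^3 / p1 - G * a2^3 / p2))"
    unfolding Fb_alt[OF p0(2) p(3) x] Fb_alt[OF p0(1) p0(3) x] a1_def[symmetric] a2_def[symmetric] G_def
    by (simp add: diff_divide_distrib algebra_simps)
  also have "\<dots> \<le> 3 / (2 * x) * ((p1 - p2) + (p1 - p2) * (10000/9801) - (891/1000) * (p1 - p2) + 0)"
  proof (rule mult_left_mono)
    show "(p1 - p2) + (1/p2 - 1/p1) + (a1^3 - a2^3) / x + (G * a1^3 / p1 - G * a2^3 / p2)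
      \<le> (p1 - p2) + (p1 - p2) * (10000/9801) - (891/1000) * (p1 - p2) + 0"
      using T2 T3 T4 by linarith
  qed (use x in simp)
  also have "\<dots> \<le> 3 / (2 * x) * (4/3 * (p1 - p2))"
  proof (rule mult_left_mono)
    show "(p1 - p2) + (p1 - p2) * (10000/9801) - (891/1000) * (p1 - p2) + 0 \<le> 4/3 * (p1 - p2)"
      using p by (simp add: field_simps)
  qed (use x in simp)
  also have "\<dots> = 2 / x * (p1 - p2)" using x by (simp add: field_simps)
  finally show ?thesis .
qed

lemma tip_quad:
  assumes sol: "toy_steady_tip_growth g \<beta> \<rho> r" and gc: "isCont g 0"
  shows "((\<lambda>s. (1 - \<rho> s) / (r s)\<^sup>2) \<longlongrightarrow> 1/18) (at_right 0)"
proof -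
  note S = sol[unfolded toy_steady_tip_growth_def]
  have basic: "\<And>s. s > 0 \<Longrightarrow> -1 < \<rho> s \<and> \<rho> s < 1 \<and> r s > 0" using S by blast
  have rho1: "(\<rho> \<longlongrightarrow> 1) (at_right 0)" using S by blast
  define q where "q s = sqrt (1 - (\<rho> s)\<^sup>2) / r s" for s
  have q: "(q \<longlongrightarrow> 1/3) (at_right 0)" using tip_eta[OF sol gc] unfolding q_def .
  have evpos: "eventually (\<lambda>s. s > 0) (at_right (0::real))"
    by (simp add: eventually_at_right_less)
  have A: "((\<lambda>s. (q s)\<^sup>2 / (1 + \<rho> s)) \<longlongrightarrow> (1/3)\<^sup>2 / (1 + 1)) (at_right 0)"
    by (intro tendsto_intros q rho1) simp
  have B: "eventually (\<lambda>s. (q s)\<^sup>2 / (1 + \<rho> s) = (1 - \<rho> s) / (r s)\<^sup>2) (at_right 0)"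
    using evpos
  proof eventually_elim
    case (elim s)
    have b: "-1 < \<rho> s" "\<rho> s < 1" "r s > 0" using basic[OF elim] by auto
    have sq: "(sqrt (1 - (\<rho> s)\<^sup>2))\<^sup>2 = 1 - (\<rho> s)\<^sup>2"
      using b by (intro real_sqrt_pow2) (simp add: abs_square_less_1 less_imp_le)
    have "(q s)\<^sup>2 = (1 - (\<rho> s)\<^sup>2) / (r s)\<^sup>2" unfolding q_def by (simp add: power_divide sq)
    then show ?case using b by (simp add: field_simps power2_eq_square)
  qed
  show ?thesis using Lim_transform_eventually[OF A B] by (simp add: power2_eq_square)
qed

lemma sol_P:
  assumes sol: "toy_steady_tip_growth g \<beta> \<rho> r" and gc: "\<And>x. isCont g x"
  shows "\<exists>R P. R > 0 \<and> \<beta> * R * g (R\<^sup>2) = 1 \<and>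
     (\<forall>x\<in>{0<..<R}. 0 < P x \<and> P x < 1 \<and> (P has_real_derivative Fb g \<beta> (P x) x) (at x)) \<and>
     (P \<longlongrightarrow> 0) (at_left R) \<and> (P \<longlongrightarrow> 1) (at_right 0) \<and>
     ((\<lambda>x. (1 - P x) / x\<^sup>2) \<longlongrightarrow> 1/18) (at_right 0) \<and>
     ((\<lambda>x. sqrt (1 - (P x)\<^sup>2) / x) \<longlongrightarrow> 1/3) (at_right 0)"
proof -
  note S = sol[unfolded toy_steady_tip_growth_def]
  have basic: "\<And>s. s > 0 \<Longrightarrow> -1 < \<rho> s \<and> \<rho> s < 1 \<and> r s > 0 \<and>
        (\<rho> has_real_derivative toy_rhs g \<beta> (\<rho> s) (r s)) (at s) \<and>
        (r has_real_derivative \<rho> s) (at s)" using S by blast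
  have pos: "\<And>s. s > 0 \<Longrightarrow> \<rho> s > 0" using S by blast
  have r0: "(r \<longlongrightarrow> 0) (at_right 0)" and rho1: "(\<rho> \<longlongrightarrow> 1) (at_right 0)"
    and rho0: "(\<rho> \<longlongrightarrow> 0) at_top" using S by blast+
  obtain R where R: "R > 0" "(r \<longlongrightarrow> R) at_top" using S by blast
  have bal: "\<beta> * R * g (R\<^sup>2) = 1" by (rule tail_balance[OF sol gc R(2,1)])
  obtain \<phi> where phi: "\<And>x. x\<in>{0<..<R} \<Longrightarrow> \<phi> x > 0 \<and> r (\<phi> x) = x \<and> isCont \<phi> x"
    and l1: "filterlim \<phi> (at_right 0) (at_right 0)" and l2: "filterlim \<phi> at_top (at_left R)"
    using reparam[of r \<rho> R] basic pos r0 R(2) by blast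
  define P where "P x = \<rho> (\<phi> x)" for x
  have Pd: "0 < P x \<and> P x < 1 \<and> (P has_real_derivative Fb g \<beta> (P x) x) (at x)" if x: "x\<in>{0<..<R}" for x
  proof -
    have p: "\<phi> x > 0" "r (\<phi> x) = x" "isCont \<phi> x" using phi[OF x] by auto
    have b: "\<rho> (\<phi> x) < 1" "\<rho> (\<phi> x) > 0" using basic[OF p(1)] pos[OF p(1)] by auto
    have dphi: "(\<phi> has_real_derivative inverse (\<rho> (\<phi> x))) (at x)"
    proof (rule DERIV_inverse_function[where f=r and a=0 and b=R])
      show "(r has_real_derivative \<rho> (\<phi> x)) (at (\<phi> x))" using basic[OF p(1)] by blast
      show "\<rho> (\<phi> x) \<noteq> 0" using b by simp
      show "0 < x" "x < R" using x by auto
      show "\<And>y. 0 < y \<Longrightarrow> y < R \<Longrightarrow> r (\<phi> y) = y" using phi by auto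
      show "isCont \<phi> x" by (rule p(3))
    qed
    have "(P has_real_derivative toy_rhs g \<beta> (\<rho> (\<phi> x)) (r (\<phi> x)) * inverse (\<rho> (\<phi> x))) (at x)"
      unfolding P_def by (rule DERIV_chain2[OF _ dphi]) (use basic[OF p(1)] in blast)
    then have "(P has_real_derivative Fb g \<beta> (P x) x) (at x)"
      unfolding Fb_def P_def p(2) by (simp add: divide_inverse)
    then show ?thesis using b unfolding P_def by simp
  qed
  have evR: "eventually (\<lambda>x. x \<in> {0<..<R}) (at_right 0)"
    unfolding eventually_at_right[OF R(1)] by (rule exI[of _ R]) (use R in auto)
  have L1: "(P \<longlongrightarrow> 0) (at_left R)" unfolding P_def using filterlim_compose[OF rho0 l2] .
  have L2: "(P \<longlongrightarrow> 1) (at_right 0)" unfolding P_def using filterlim_compose[OF rho1 l1] .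
  have L3: "((\<lambda>x. (1 - P x) / x\<^sup>2) \<longlongrightarrow> 1/18) (at_right 0)"
  proof -
    have "((\<lambda>x. (1 - \<rho> (\<phi> x)) / (r (\<phi> x))\<^sup>2) \<longlongrightarrow> 1/18) (at_right 0)"
      using filterlim_compose[OF tip_quad[OF sol gc[of 0]] l1] by simp
    moreover have "eventually (\<lambda>x. (1 - \<rho> (\<phi> x)) / (r (\<phi> x))\<^sup>2 = (1 - P x) / x\<^sup>2) (at_right 0)"
      using evR by eventually_elim (use phi in \<open>simp add: P_def\<close>)
    ultimately show ?thesis by (rule Lim_transform_eventually)
  qed
  have L4: "((\<lambda>x. sqrt (1 - (P x)\<^sup>2) / x) \<longlongrightarrow> 1/3) (at_right 0)"
  proof -
    have "((\<lambda>x. sqrt (1 - (\<rho> (\<phi> x))\<^sup>2) / r (\<phi> x)) \<longlongrightarrow> 1/3) (at_right 0)"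
      using filterlim_compose[OF tip_eta[OF sol gc[of 0]] l1] by simp
    moreover have "eventually (\<lambda>x. sqrt (1 - (\<rho> (\<phi> x))\<^sup>2) / r (\<phi> x) = sqrt (1 - (P x)\<^sup>2) / x) (at_right 0)"
      using evR by eventually_elim (use phi in \<open>simp add: P_def\<close>)
    ultimately show ?thesis by (rule Lim_transform_eventually)
  qed
  show ?thesis using R(1) bal Pd L1 L2 L3 L4 by blast
qed

lemma no_two:
  fixes g :: "real \<Rightarrow> real"
  assumes gpos: "\<And>v. v > 0 \<Longrightarrow> g v > 0"
    and gmono: "\<And>u v. 0 < u \<Longrightarrow> u \<le> v \<Longrightarrow> g u \<le> g v"
    and b: "0 < \<beta>1" "\<beta>1 < \<beta>2"
    and R1: "R1 > 0" "\<beta>1 * R1 * g (R1\<^sup>2) = 1"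
    and P1: "\<And>x. x\<in>{0<..<R1} \<Longrightarrow> 0 < P1 x \<and> P1 x < 1 \<and> (P1 has_real_derivative Fb g \<beta>1 (P1 x) x) (at x)"
    and P1one: "(P1 \<longlongrightarrow> 1) (at_right 0)"
    and P1q: "((\<lambda>x. (1 - P1 x) / x\<^sup>2) \<longlongrightarrow> 1/18) (at_right 0)"
    and P1s: "((\<lambda>x. sqrt (1 - (P1 x)\<^sup>2) / x) \<longlongrightarrow> 1/3) (at_right 0)"
    and R2: "R2 > 0" "\<beta>2 * R2 * g (R2\<^sup>2) = 1"
    and P2: "\<And>x. x\<in>{0<..<R2} \<Longrightarrow> 0 < P2 x \<and> P2 x < 1 \<and> (P2 has_real_derivative Fb g \<beta>2 (P2 x) x) (at x)"
    and P2z: "(P2 \<longlongrightarrow> 0) (at_left R2)"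
    and P2one: "(P2 \<longlongrightarrow> 1) (at_right 0)"
    and P2q: "((\<lambda>x. (1 - P2 x) / x\<^sup>2) \<longlongrightarrow> 1/18) (at_right 0)"
  shows False
proof -
  have R21: "R2 < R1"
  proof (rule ccontr)
    assume "\<not> R2 < R1"
    then have le: "R1 \<le> R2" by simp
    have g1: "g (R1\<^sup>2) > 0" using gpos R1 by simp
    have "g (R1\<^sup>2) \<le> g (R2\<^sup>2)" using gmono[of "R1\<^sup>2" "R2\<^sup>2"] R1 le by (simp add: power_mono)
    have "\<beta>1 * R1 * g (R1\<^sup>2) < \<beta>2 * R1 * g (R1\<^sup>2)" using b R1(1) g1 by (intro mult_strict_right_mono) auto
    also have "\<dots> \<le> \<beta>2 * R2 * g (R2\<^sup>2)"
      using b R1 g1 le \<open>g (R1\<^sup>2) \<le> g (R2\<^sup>2)\<close> by (intro mult_mono) auto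
    finally show False using R1 R2 by simp
  qed
  define D where "D x = P2 x - P1 x" for x
  define D' where "D' x = Fb g \<beta>2 (P2 x) x - Fb g \<beta>1 (P1 x) x" for x
  have in1: "x \<in> {0<..<R1}" if "0 < x" "x < R2" for x using that R21 by simp
  have Dd: "(D has_real_derivative D' x) (at x)" if "0 < x" "x < R2" for x
    unfolding D_def D'_def using P1[OF in1[OF that]] P2 that by (auto intro!: derivative_eq_intros)
  have Dz: "D' x > 0" if "0 < x" "x < R2" "D x = 0" for x
  proof -
    have e: "P2 x = P1 x" using that(3) unfolding D_def by simp
    show ?thesis unfolding D'_def e using Fb_beta_mono[of "P1 x" x g \<beta>1 \<beta>2] P1[OF in1[OF that(1,2)]] gpos that b
      by simp
  qed
  have cR2: "isCont P1 R2" using P1[of R2] R2 R21 by (auto intro: DERIV_isCont)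
  have "(P1 \<longlongrightarrow> P1 R2) (at_left R2)" using cR2 unfolding isCont_def filterlim_at_split by simp
  then have "(D \<longlongrightarrow> 0 - P1 R2) (at_left R2)" unfolding D_def by (intro tendsto_intros P2z)
  moreover have "0 - P1 R2 < 0" using P1[of R2] R2 R21 by simp
  ultimately have "eventually (\<lambda>x. D x < 0) (at_left R2)" by (rule order_tendstoD(2))
  then obtain b0 where b0: "b0 < R2" "\<And>y. b0 < y \<Longrightarrow> y < R2 \<Longrightarrow> D y < 0"
    unfolding eventually_at_left[OF R2(1)] by blast
  define c where "c = max b0 (R2/2)"
  have Dneg: "D x < 0" if "0 < x" "x < R2" for x
  proof (rule neg_everywhere[where f=D and f'=D' and b=R2 and c=c])
    show "\<And>x. 0 < x \<Longrightarrow> x < R2 \<Longrightarrow> (D has_real_derivative D' x) (at x)" by (rule Dd)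
    show "\<And>x. 0 < x \<Longrightarrow> x < R2 \<Longrightarrow> D x = 0 \<Longrightarrow> D' x > 0" by (rule Dz)
    show "0 < c" "c < R2" using R2 b0 unfolding c_def by auto
    show "\<And>x. c < x \<Longrightarrow> x < R2 \<Longrightarrow> D x < 0" using b0 unfolding c_def by auto
  qed (use that in auto)
  have e1: "eventually (\<lambda>x. 99/100 < P1 x) (at_right 0)" by (rule order_tendstoD(1)[OF P1one]) simp
  have e2: "eventually (\<lambda>x. 99/100 < P2 x) (at_right 0)" by (rule order_tendstoD(1)[OF P2one]) simp
  have e3: "eventually (\<lambda>x. 3/10 < sqrt (1 - (P1 x)\<^sup>2) / x) (at_right 0)" by (rule order_tendstoD(1)[OF P1s]) simp
  have e4: "eventually (\<lambda>x. 0 < x \<and> x < R2) (at_right 0)"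
    unfolding eventually_at_right[OF R2(1)] by (rule exI[of _ R2]) (use R2 in auto)
  have "eventually (\<lambda>x. 99/100 < P1 x \<and> 99/100 < P2 x \<and> 3/10 < sqrt (1 - (P1 x)\<^sup>2) / x \<and> 0 < x \<and> x < R2) (at_right 0)"
    using e1 e2 e3 e4 by eventually_elim auto
  then obtain \<delta> where \<delta>: "\<delta> > 0" "\<And>x. 0 < x \<Longrightarrow> x < \<delta> \<Longrightarrow>
      99/100 < P1 x \<and> 99/100 < P2 x \<and> 3/10 < sqrt (1 - (P1 x)\<^sup>2) / x \<and> 0 < x \<and> x < R2"
    unfolding eventually_at_right[OF zero_less_one] by blast
  have key: "D' x > 2 / x * D x" if x: "0 < x" "x < \<delta>" for x
  proof -
    note h = \<delta>(2)[OF x]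
    have xr: "x < R2" using h by simp
    have p1: "0 < P1 x" "P1 x < 1" using P1[OF in1[OF x(1) xr]] by auto
    have p2: "0 < P2 x" "P2 x < 1" using P2[of x] x(1) xr by auto
    have lt: "P2 x < P1 x" using Dneg[OF x(1) xr] unfolding D_def by simp
    have gx: "g (x\<^sup>2) > 0" using gpos x by simp
    have q: "sqrt (1 - (P1 x)\<^sup>2) \<ge> 3/10 * x" using h x by (simp add: field_simps)
    have s: "Fb g \<beta>2 (P1 x) x - Fb g \<beta>2 (P2 x) x \<le> 2 / x * (P1 x - P2 x)"
      by (rule Fb_slope) (use h lt p1 x b gx q in auto)
    have m: "Fb g \<beta>1 (P1 x) x < Fb g \<beta>2 (P1 x) x" by (rule Fb_beta_mono) (use p1 x gx b in auto)
    have "2 / x * D x = - (2 / x * (P1 x - P2 x))" unfolding D_def using x(1) by (simp add: field_simps)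
    then show ?thesis using s m unfolding D'_def by linarith
  qed
  define w where "w x = D x / x\<^sup>2" for x
  have wd: "(w has_real_derivative (D' x * x\<^sup>2 - D x * (2 * x)) / (x\<^sup>2)\<^sup>2) (at x)"
    if "0 < x" "x < \<delta>" for x
  proof -
    have "x < R2" using \<delta>(2)[OF that] by simp
    show ?thesis unfolding w_def using Dd[OF that(1) \<open>x < R2\<close>] that
      by (auto intro!: derivative_eq_intros simp: power2_eq_square)
  qed
  have wpos: "(D' x * x\<^sup>2 - D x * (2 * x)) / (x\<^sup>2)\<^sup>2 > 0" if "0 < x" "x < \<delta>" for x
  proof -
    have "2 / x * D x * x\<^sup>2 < D' x * x\<^sup>2" using key[OF that] that by (intro mult_strict_right_mono) auto
    moreover have "2 / x * D x * x\<^sup>2 = D x * (2 * x)" using that by (simp add: field_simps power2_eq_square)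
    ultimately show ?thesis using that by simp
  qed
  define x1 where "x1 = \<delta> / 2"
  have x1: "0 < x1" "x1 < \<delta>" using \<delta> unfolding x1_def by auto
  have wlt: "w y < w x1" if "0 < y" "y < x1" for y
  proof -
    have d: "\<And>t. y \<le> t \<Longrightarrow> t \<le> x1 \<Longrightarrow> (w has_real_derivative (D' t * t\<^sup>2 - D t * (2 * t)) / (t\<^sup>2)\<^sup>2) (at t)"
      using wd that x1 by auto
    from MVT2[OF that(2) d] obtain z where z: "y < z" "z < x1"
      "w x1 - w y = (x1 - y) * ((D' z * z\<^sup>2 - D z * (2 * z)) / (z\<^sup>2)\<^sup>2)" by blast
    have "(D' z * z\<^sup>2 - D z * (2 * z)) / (z\<^sup>2)\<^sup>2 > 0" using wpos z that x1 by auto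
    then have "(x1 - y) * ((D' z * z\<^sup>2 - D z * (2 * z)) / (z\<^sup>2)\<^sup>2) > 0" using that by (intro mult_pos_pos) auto
    then show ?thesis using z(3) by simp
  qed
  have wlim: "(w \<longlongrightarrow> 1/18 - 1/18) (at_right 0)"
  proof -
    have "w = (\<lambda>x. (1 - P1 x) / x\<^sup>2 - (1 - P2 x) / x\<^sup>2)"
      unfolding w_def D_def by (rule ext) (simp add: diff_divide_distrib[symmetric])
    then show ?thesis using tendsto_diff[OF P1q P2q] by simp
  qed
  have "eventually (\<lambda>y. w y \<le> w x1) (at_right 0)"
    unfolding eventually_at_right[OF x1(1)] by (rule exI[of _ x1]) (use x1 wlt in \<open>auto intro: less_imp_le\<close>)
  then have "0 \<le> w x1" using tendsto_upperbound[OF wlim] by simp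
  moreover have "w x1 < 0" unfolding w_def using Dneg[of x1] x1 \<delta>(2)[OF x1] by (simp add: divide_neg_pos)
  ultimately show False by simp
qed


theorem theorem3p2:
  fixes g :: "real \<Rightarrow> real"
  assumes "real_analytic_on g UNIV"
    and "\<And>v. v > 0 \<Longrightarrow> g v > 0"
    and "\<And>v. v > 0 \<Longrightarrow> deriv g v \<ge> 0"
    and "\<And>v. v > 0 \<Longrightarrow> deriv (deriv (\<lambda>w. w\<^sup>2 * g (w\<^sup>2))) v > 0"
    and "filterlim (\<lambda>v. v * g (v\<^sup>2)) at_top at_top"
  shows "closedin (top_of_set {0<..})
           {\<beta>::real. \<beta> > 0 \<and> (\<exists>\<rho> r. toy_steady_tip_growth g \<beta> \<rho> r)}
       \<and> interior {\<beta>::real. \<beta> > 0 \<and> (\<exists>\<rho> r. toy_steady_tip_growth g \<beta> \<rho> r)} = {}"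
proof -
  define S where "S = {\<beta>::real. \<beta> > 0 \<and> (\<exists>\<rho> r. toy_steady_tip_growth g \<beta> \<rho> r)}"
  have gd: "\<exists>D. (g has_real_derivative D) (at x)" for x
    using analytic_has_deriv[OF assms(1)] by simp
  have gc: "isCont g x" for x using gd[of x] by (auto intro: DERIV_isCont)
  have gmono: "g u \<le> g v" if "0 < u" "u \<le> v" for u v
  proof (rule DERIV_nonneg_imp_nondecreasing[OF that(2)])
    fix x assume x: "u \<le> x" "x \<le> v"
    obtain D where D: "(g has_real_derivative D) (at x)" using gd by blast
    have "deriv g x = D" using D by (rule DERIV_imp_deriv)
    moreover have "deriv g x \<ge> 0" using assms(3)[of x] x that by simp
    ultimately show "\<exists>y. (g has_real_derivative y) (at x) \<and> y \<ge> 0" using D by auto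
  qed
  have lt: False if h: "\<beta>1 \<in> S" "\<beta>2 \<in> S" "\<beta>1 < \<beta>2" for \<beta>1 \<beta>2
  proof -
    obtain \<rho>1 r1 where s1: "toy_steady_tip_growth g \<beta>1 \<rho>1 r1" and b1: "\<beta>1 > 0"
      using h(1) unfolding S_def by blast
    obtain \<rho>2 r2 where s2: "toy_steady_tip_growth g \<beta>2 \<rho>2 r2"
      using h(2) unfolding S_def by blast
    obtain R1 P1 where A: "R1 > 0" "\<beta>1 * R1 * g (R1\<^sup>2) = 1"
     "\<forall>x\<in>{0<..<R1}. 0 < P1 x \<and> P1 x < 1 \<and> (P1 has_real_derivative Fb g \<beta>1 (P1 x) x) (at x)"
     "(P1 \<longlongrightarrow> 0) (at_left R1)" "(P1 \<longlongrightarrow> 1) (at_right 0)"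
     "((\<lambda>x. (1 - P1 x) / x\<^sup>2) \<longlongrightarrow> 1/18) (at_right 0)"
     "((\<lambda>x. sqrt (1 - (P1 x)\<^sup>2) / x) \<longlongrightarrow> 1/3) (at_right 0)"
      using sol_P[OF s1 gc] by blast
    obtain R2 P2 where B: "R2 > 0" "\<beta>2 * R2 * g (R2\<^sup>2) = 1"
     "\<forall>x\<in>{0<..<R2}. 0 < P2 x \<and> P2 x < 1 \<and> (P2 has_real_derivative Fb g \<beta>2 (P2 x) x) (at x)"
     "(P2 \<longlongrightarrow> 0) (at_left R2)" "(P2 \<longlongrightarrow> 1) (at_right 0)"
     "((\<lambda>x. (1 - P2 x) / x\<^sup>2) \<longlongrightarrow> 1/18) (at_right 0)"
     "((\<lambda>x. sqrt (1 - (P2 x)\<^sup>2) / x) \<longlongrightarrow> 1/3) (at_right 0)"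
      using sol_P[OF s2 gc] by blast
    show False
      by (rule no_two[of g \<beta>1 \<beta>2 R1 P1 R2 P2])
        (use assms(2) gmono b1 h(3) A B in auto)
  qed
  have uniq: "x = y" if "x \<in> S" "y \<in> S" for x y
    using lt[OF that] lt[OF that(2,1)] by (cases x y rule: linorder_cases) auto
  have cases: "S = {} \<or> (\<exists>b. b > 0 \<and> S = {b})"
  proof (cases "S = {}")
    case False
    then obtain b where b: "b \<in> S" by blast
    then have "S = {b}" using uniq by blast
    moreover have "b > 0" using b unfolding S_def by simp
    ultimately show ?thesis by blast
  qed simp
  have "closedin (top_of_set {0<..}) S \<and> interior S = {}"
    using cases
  proof
    assume "S = {}" then show ?thesis by simp
  next
    assume "\<exists>b. b > 0 \<and> S = {b}"
    then obtain b where b: "b > 0" "S = {b}" by blast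
    have "closedin (top_of_set {0<..}) {b}"
      unfolding closedin_closed by (rule exI[of _ "{b}"]) (use b in auto)
    then show ?thesis using b by simp
  qed
  then show ?thesis unfolding S_def .
qed

end
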